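(* Let $X$, $Z$ be topological vector spaces, $C\subseteq Z$ a nonempty closed convex cone with $C^-\neq\{0\}$, and $f:X\to\mathcal{F}(Z,C)$ convex. If $f$ is efficient at $x_0\in X$, then $f$ is lower continuous at $x_0$.
   Context: $\mathcal{F}(Z,C)=\{A\subseteq Z\colon A=\operatorname{cl}(A+C)\}$ (empty set included); $C^-=\{z^*\in Z^*\colon z^*(z)\le0\ \forall z\in C\}$. $f$ is convex iff $tf(x_1)+(1-t)f(x_2)\subseteq f(tx_1+(1-t)x_2)$ for all $x_1,x_2\in X$, $t\in(0,1)$. $f$ is efficient at $x_0$ iff there exist a neighborhood $U$ of $x_0$ and a bounded set $B\subseteq Z$ (absorbed by every neighborhood of $0$) with $f(x)\cap B\neq\emptyset$ for all $x\in U$. $f$ is lower continuous at $x_0$ iff for every $z_0\in f(x_0)$ and every neighborhood $V$ of $z_0$ there is a neighborhood $U$ of $x_0$ with $f(x)\cap V\neq\emptyset$ for all $x\in U$. *)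

theory Defs
  imports "HOL-Analysis.Analysis"
begin

definition tvs :: "'a::{real_vector,topological_space} itself \<Rightarrow> bool" where
  "tvs _ \<longleftrightarrow>
     continuous_on UNIV (\<lambda>p::'a \<times> 'a. fst p + snd p) \<and>
     continuous_on UNIV (\<lambda>p::real \<times> 'a. fst p *\<^sub>R snd p)"

text \<open>The family F(Z,C) of sets A with A = cl(A + C) (empty set included).\<close>
definition FZC :: "'z::{real_vector,topological_space} set \<Rightarrow> 'z set set" where
  "FZC C = {A. A = closure {a + c | a c. a \<in> A \<and> c \<in> C}}"

definition neg_dual_cone :: "'z::{real_vector,topological_space} set \<Rightarrow> ('z \<Rightarrow> real) set" where
  "neg_dual_cone C = {g. linear g \<and> continuous_on UNIV g \<and> (\<forall>z\<in>C. g z \<le> 0)}"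

definition set_convex_fun :: "('x::real_vector \<Rightarrow> 'z::real_vector set) \<Rightarrow> bool" where
  "set_convex_fun f \<longleftrightarrow>
     (\<forall>x1 x2 t. 0 < t \<and> t < 1 \<longrightarrow>
        {t *\<^sub>R a + (1 - t) *\<^sub>R b | a b. a \<in> f x1 \<and> b \<in> f x2}
          \<subseteq> f (t *\<^sub>R x1 + (1 - t) *\<^sub>R x2))"

definition tvs_bounded :: "'z::{real_vector,topological_space} set \<Rightarrow> bool" where
  "tvs_bounded B \<longleftrightarrow>
     (\<forall>V. open V \<and> 0 \<in> V \<longrightarrow> (\<exists>t>0. B \<subseteq> (\<lambda>v. t *\<^sub>R v) ` V))"

definition efficient_at ::
  "('x::topological_space \<Rightarrow> 'z::{real_vector,topological_space} set) \<Rightarrow> 'x \<Rightarrow> bool" where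
  "efficient_at f x0 \<longleftrightarrow>
     (\<exists>U B. open U \<and> x0 \<in> U \<and> tvs_bounded B \<and> (\<forall>x\<in>U. f x \<inter> B \<noteq> {}))"

definition lower_continuous_at ::
  "('x::topological_space \<Rightarrow> 'z::topological_space set) \<Rightarrow> 'x \<Rightarrow> bool" where
  "lower_continuous_at f x0 \<longleftrightarrow>
     (\<forall>z0\<in>f x0. \<forall>V. open V \<and> z0 \<in> V \<longrightarrow>
        (\<exists>U. open U \<and> x0 \<in> U \<and> (\<forall>x\<in>U. f x \<inter> V \<noteq> {})))"

end

theory Submission
  imports Defs
begin

lemma tvs_add_cont:
  fixes f g :: "'b::topological_space \<Rightarrow> 'a::{real_vector,topological_space}"
  assumes "tvs TYPE('a)" "continuous_on S f" "continuous_on S g"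
  shows "continuous_on S (\<lambda>x. f x + g x)"
proof -
  have c: "continuous_on UNIV (\<lambda>p::'a \<times> 'a. fst p + snd p)" using assms(1) by (simp add: tvs_def)
  have "continuous_on S (\<lambda>x. (\<lambda>p::'a \<times> 'a. fst p + snd p) (f x, g x))"
    by (rule continuous_on_compose2[OF c]) (auto intro: continuous_on_Pair assms)
  then show ?thesis by simp
qed

lemma tvs_scale_cont:
  fixes f :: "'b::topological_space \<Rightarrow> real" and g :: "'b \<Rightarrow> 'a::{real_vector,topological_space}"
  assumes "tvs TYPE('a)" "continuous_on S f" "continuous_on S g"
  shows "continuous_on S (\<lambda>x. f x *\<^sub>R g x)"
proof -
  have c: "continuous_on UNIV (\<lambda>p::real \<times> 'a. fst p *\<^sub>R snd p)" using assms(1) by (simp add: tvs_def)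
  have "continuous_on S (\<lambda>x. (\<lambda>p::real \<times> 'a. fst p *\<^sub>R snd p) (f x, g x))"
    by (rule continuous_on_compose2[OF c]) (auto intro: continuous_on_Pair assms)
  then show ?thesis by simp
qed

theorem mainTheorem3:
  fixes f :: "'x::{real_vector,topological_space} \<Rightarrow> 'z::{real_vector,topological_space} set"
    and C :: "'z set" and x0 :: 'x
  assumes "tvs TYPE('x)" and "tvs TYPE('z)"
    and "C \<noteq> {}" and "closed C" and "convex C" and "cone C"
    and "neg_dual_cone C \<noteq> {\<lambda>_. 0}"
    and "\<forall>x. f x \<in> FZC C"
    and "set_convex_fun f"
    and "efficient_at f x0"
  shows "lower_continuous_at f x0"
  unfolding lower_continuous_at_def
proof (intro ballI allI impI)
  fix z0 V assume z0: "z0 \<in> f x0" and V: "open V \<and> z0 \<in> V"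
  obtain U B where U: "open U" "x0 \<in> U" "tvs_bounded B" "\<forall>x\<in>U. f x \<inter> B \<noteq> {}"
    using assms(10) unfolding efficient_at_def by blast
  define K :: "real \<times> (real \<times> 'z) \<Rightarrow> 'z" where
    "K p = (1 - fst p) *\<^sub>R z0 + fst (snd p) *\<^sub>R snd (snd p)" for p
  have contK: "continuous_on UNIV K"
    unfolding K_def
    by (intro tvs_add_cont[OF assms(2)] tvs_scale_cont[OF assms(2)])
       (auto intro!: continuous_intros)
  have "open (UNIV \<inter> K -` V)"
    using continuous_on_open_vimage[of UNIV K] contK V by auto
  moreover have "(0,(0,0)) \<in> UNIV \<inter> K -` V" using V by (simp add: K_def)
  ultimately obtain A D where AD: "open A" "open D" "(0,(0,0)) \<in> A \<times> D" "A \<times> D \<subseteq> K -` V"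
    by (metis open_prod_elim inf_top_left)
  obtain R N where RN: "open R" "open N" "(0,0) \<in> R \<times> N" "R \<times> N \<subseteq> D"
    using open_prod_elim[OF AD(2)] AD(3) by (metis mem_Times_iff snd_conv)
  obtain e1 where e1: "e1 > 0" "ball 0 e1 \<subseteq> A" using AD(1,3) open_contains_ball by blast
  obtain e2 where e2: "e2 > 0" "ball 0 e2 \<subseteq> R" using RN(1,3) open_contains_ball by blast
  obtain s where s: "s > 0" "B \<subseteq> (\<lambda>v. s *\<^sub>R v) ` N"
    using U(3) RN(2,3) unfolding tvs_bounded_def by blast
  define t where "t = min (1 / 2) (min (e1 / 2) (e2 / (2 * s)))"
  have t0: "0 < t" "t < 1" "t < e1" "t * s < e2"
  proof -
    have a: "t \<le> 1 / 2" "t \<le> e1 / 2" "t \<le> e2 / (2 * s)" unfolding t_def by auto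
    have "0 < t" using e1 e2 s unfolding t_def by auto
    moreover have "t * s \<le> e2 / 2" using a(3) s by (simp add: field_simps)
    ultimately show "0 < t" "t < 1" "t < e1" "t * s < e2" using a e1 e2 by auto
  qed
  define g where "g x = (1/t) *\<^sub>R x + (x0 - (1/t) *\<^sub>R x0)" for x
  have contg: "continuous_on UNIV g"
    unfolding g_def
    by (intro tvs_add_cont[OF assms(1)] tvs_scale_cont[OF assms(1)])
       (auto intro!: continuous_intros)
  have oU': "open (UNIV \<inter> g -` U)"
    using continuous_on_open_vimage[of UNIV g] contg U(1) by auto
  have x0U': "x0 \<in> UNIV \<inter> g -` U" using U(2) by (simp add: g_def)
  have "\<forall>x\<in>UNIV \<inter> g -` U. f x \<inter> V \<noteq> {}"
  proof
    fix x assume "x \<in> UNIV \<inter> g -` U"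
    then have "g x \<in> U" by simp
    then obtain b where b: "b \<in> f (g x)" "b \<in> B" using U(4) by blast
    then obtain n where n: "n \<in> N" "b = s *\<^sub>R n" using s by blast
    have xe: "t *\<^sub>R g x + (1 - t) *\<^sub>R x0 = x"
      using t0 by (simp add: g_def algebra_simps)
    have "t *\<^sub>R b + (1 - t) *\<^sub>R z0 \<in> f (t *\<^sub>R g x + (1 - t) *\<^sub>R x0)"
      using assms(9) t0 b z0 unfolding set_convex_fun_def by blast
    then have inf: "t *\<^sub>R b + (1 - t) *\<^sub>R z0 \<in> f x" using xe by simp
    have "t \<in> A" using e1 t0 by (auto simp: dist_real_def)
    moreover have "t * s \<in> R" using e2 t0 s by (auto simp: dist_real_def mult_nonneg_nonneg)
    ultimately have "(t, (t * s, n)) \<in> K -` V" using RN(4) AD(4) n by blast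
    then have "t *\<^sub>R b + (1 - t) *\<^sub>R z0 \<in> V" using n by (simp add: K_def algebra_simps)
    then show "f x \<inter> V \<noteq> {}" using inf by blast
  qed
  then show "\<exists>U. open U \<and> x0 \<in> U \<and> (\<forall>x\<in>U. f x \<inter> V \<noteq> {})" using oU' x0U' by blast
qed

end
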